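(* Let $I$ be a quasipolar general ring and let $A$ be a two-sided ideal of $I$. Then $A$ is a quasipolar general ring.
   Context: A general ring is an associative ring not necessarily having an identity. For a general ring $K$ and $p,q\in K$, $p*q=p+q-pq$; $Q(K)=\{q\in K\mid p*q=0=q*p\text{ for some }p\in K\}$; $\mathrm{comm}_K(a)=\{x\in K\mid xa=ax\}$, $\mathrm{comm}_K^2(a)=\{x\in K\mid xy=yx\text{ for all }y\in\mathrm{comm}_K(a)\}$; $QN(K)=\{q\in K\mid qx\in Q(K)\text{ for all }x\in\mathrm{comm}_K(q)\}$. An element $a\in K$ is quasipolar in $K$ if there is an idempotent $p\in\mathrm{comm}_K^2(a)$ with $a+p\in Q(K)$ and $a-ap\in QN(K)$; $K$ is a quasipolar general ring if every element of $K$ is quasipolar in $K$ (all notions computed inside $K$). *)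

theory Defs
  imports Main
begin

text \<open>General rings: the type class ring in Main is associative and NOT required
to have an identity. A general ring is modelled as a subset K of such a type that is
closed under the ring operations (a subring without identity); all notions are
computed inside K.\<close>

definition gsubring :: "'a::ring set \<Rightarrow> bool" where
  "gsubring K \<longleftrightarrow> 0 \<in> K \<and> (\<forall>x\<in>K. \<forall>y\<in>K. x + y \<in> K \<and> x - y \<in> K \<and> x * y \<in> K)"

definition two_sided_ideal :: "'a::ring set \<Rightarrow> 'a set \<Rightarrow> bool" where
  "two_sided_ideal A I \<longleftrightarrow> A \<subseteq> I \<and> 0 \<in> A \<and>
     (\<forall>x\<in>A. \<forall>y\<in>A. x + y \<in> A \<and> x - y \<in> A) \<and>
     (\<forall>x\<in>A. \<forall>r\<in>I. r * x \<in> A \<and> x * r \<in> A)"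

definition circ :: "'a::ring \<Rightarrow> 'a \<Rightarrow> 'a" where
  "circ p q = p + q - p * q"

definition Qset :: "'a::ring set \<Rightarrow> 'a set" where
  "Qset K = {q \<in> K. \<exists>p\<in>K. circ p q = 0 \<and> circ q p = 0}"

definition comm_in :: "'a::ring set \<Rightarrow> 'a \<Rightarrow> 'a set" where
  "comm_in K a = {x \<in> K. x * a = a * x}"

definition comm2_in :: "'a::ring set \<Rightarrow> 'a \<Rightarrow> 'a set" where
  "comm2_in K a = {x \<in> K. \<forall>y\<in>comm_in K a. x * y = y * x}"

definition QN :: "'a::ring set \<Rightarrow> 'a set" where
  "QN K = {q \<in> K. \<forall>x\<in>comm_in K q. q * x \<in> Qset K}"

definition quasipolar_in :: "'a::ring set \<Rightarrow> 'a \<Rightarrow> bool" where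
  "quasipolar_in K a \<longleftrightarrow> (\<exists>p. p \<in> comm2_in K a \<and> p * p = p \<and> a + p \<in> Qset K \<and> a - a * p \<in> QN K)"

definition quasipolar_general_ring :: "'a::ring set \<Rightarrow> bool" where
  "quasipolar_general_ring K \<longleftrightarrow> gsubring K \<and> (\<forall>a\<in>K. quasipolar_in K a)"

end

theory Submission
  imports Defs
begin

lemma key_p:
  fixes a p q :: "'a::ring"
  assumes "p * a = a * p" "p * p = p" "circ (a + p) q = 0"
  shows "p = a * (p * q - p)"
proof -
  have s: "(a + p) + q = (a + p) * q" using assms(3) by (simp add: circ_def algebra_simps)
  have "p * ((a + p) + q) = p * ((a + p) * q)" using s by simp
  also have "p * ((a + p) + q) = a * p + p + p * q"
    using assms(1,2) by (simp add: distrib_left)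
  also have "p * ((a + p) * q) = (p * a + p * p) * q" by (simp add: distrib_left distrib_right mult.assoc)
  also have "\<dots> = a * p * q + p * q" using assms(1,2) by (simp add: distrib_right)
  finally have "a * p + p = a * p * q" by simp
  hence "p = a * p * q - a * p" by (simp add: algebra_simps)
  thus ?thesis by (simp add: right_diff_distrib mult.assoc)
qed

theorem theorem3p2:
  fixes I A :: "'a::ring set"
  assumes "quasipolar_general_ring I"
    and "two_sided_ideal A I"
  shows "quasipolar_general_ring A"
proof -
  have AI: "A \<subseteq> I" and A0: "0 \<in> A"
    and Aadd: "\<And>x y. x\<in>A \<Longrightarrow> y\<in>A \<Longrightarrow> x + y \<in> A \<and> x - y \<in> A"
    and Amul: "\<And>x r. x\<in>A \<Longrightarrow> r\<in>I \<Longrightarrow> r * x \<in> A \<and> x * r \<in> A"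
    using assms(2) unfolding two_sided_ideal_def by blast+
  have gI: "gsubring I" using assms(1) unfolding quasipolar_general_ring_def by blast
  hence Iops: "\<And>x y. x\<in>I \<Longrightarrow> y\<in>I \<Longrightarrow> x + y \<in> I \<and> x - y \<in> I \<and> x * y \<in> I"
    unfolding gsubring_def by blast
  have "gsubring A" unfolding gsubring_def using A0 Aadd Amul AI by blast
  moreover have "quasipolar_in A a" if aA: "a \<in> A" for a
  proof -
    have aI: "a \<in> I" using aA AI by blast
    obtain p where p2: "p \<in> comm2_in I a" and pid: "p * p = p"
      and sQ: "a + p \<in> Qset I" and bQN: "a - a * p \<in> QN I"
      using assms(1) aI unfolding quasipolar_general_ring_def quasipolar_in_def by blast
    have pI: "p \<in> I" using p2 unfolding comm2_in_def by blast
    have pa: "p * a = a * p" using p2 aI unfolding comm2_in_def comm_in_def by blast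
    obtain q where qI: "q \<in> I" and c1: "circ q (a + p) = 0" and c2: "circ (a + p) q = 0"
      using sQ unfolding Qset_def by blast
    have peq: "p = a * (p * q - p)" using key_p[OF pa pid c2] .
    have pqI: "p * q - p \<in> I" using Iops[OF pI qI] Iops pI by blast
    have pA: "p \<in> A" using Amul[OF aA pqI] peq by metis
    have sA: "a + p \<in> A" using Aadd aA pA by blast
    have qeq: "q = (a + p) * q - (a + p)" using c2 by (simp add: circ_def algebra_simps)
    have qA: "q \<in> A" using qeq Aadd[of "(a + p) * q" "a + p"] Amul[OF sA qI] sA by metis
    have 1: "p \<in> comm2_in A a" using p2 pA unfolding comm2_in_def comm_in_def using AI by blast
    have 2: "a + p \<in> Qset A" unfolding Qset_def using sA qA c1 c2 by blast
    have bA: "a - a * p \<in> A" using Aadd aA Amul[OF aA pI] by blast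
    have 3: "a - a * p \<in> QN A"
      unfolding QN_def
    proof (intro CollectI conjI ballI bA)
      fix x assume xc: "x \<in> comm_in A (a - a * p)"
      hence xA: "x \<in> A" unfolding comm_in_def by blast
      have "x \<in> comm_in I (a - a * p)" using xc AI unfolding comm_in_def by blast
      hence bxQ: "(a - a * p) * x \<in> Qset I" using bQN unfolding QN_def by blast
      define b where "b = (a - a * p) * x"
      have bxA: "b \<in> A" unfolding b_def using Amul[OF xA] bA AI by blast
      obtain r where rI: "r \<in> I" and d1: "circ r b = 0" and d2: "circ b r = 0"
        using bxQ unfolding Qset_def b_def by blast
      have req: "r = b * r - b" using d2 by (simp add: circ_def algebra_simps)
      have rA: "r \<in> A" using req Aadd[of "b * r" b] Amul[OF bxA rI] bxA by metis
      show "(a - a * p) * x \<in> Qset A" unfolding Qset_def b_def[symmetric]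
        using bxA rA d1 d2 by blast
    qed
    show ?thesis unfolding quasipolar_in_def using 1 pid 2 3 by blast
  qed
  ultimately show ?thesis unfolding quasipolar_general_ring_def by blast
qed

end
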